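(* Let $G=\mathrm{Sp}(2r)$ with $r\geqslant1$, let $\lambda\in\Lambda^+$, $\lambda\neq0$, let $q=\max\{i\leqslant r:\alpha_i\in\operatorname{Supp}(\lambda)\}$ and set $\lambda^{\mathrm{lb}}_G=\lambda-\sum_{i=q}^{r-1}\alpha_i-\tfrac12\alpha_r=\lambda+\omega_{q-1}-\omega_q$ (with $\omega_0=0$). Then $\mathrm{LB}_G(\lambda)=\{\lambda^{\mathrm{lb}}_G\}$, i.e. $\lambda^{\mathrm{lb}}_G$ is the unique little brother of $\lambda$ with respect to $G$.
   Context: $G=\mathrm{Sp}(2r)$ over an algebraically closed field of characteristic zero (simply connected, so $\mathcal{X}(T)=\Lambda$ is the weight lattice), $T\subset B$ a maximal torus and Borel subgroup, $\Phi^+$ the positive roots, simple roots $\alpha_1,\dots,\alpha_r$ numbered as in Bourbaki (type $\mathsf{C}_r$, $\alpha_r$ long; $\mathsf{C}_2=\mathsf{B}_2$, $\mathsf{C}_1=\mathsf{A}_1$), $\omega_i$ the fundamental weights, $\Lambda^+$ the dominant weights. $\Pi^+(\lambda)=\{\mu\in\Lambda^+:\lambda-\mu\in\mathbb{N}[\Delta]\}$, $\Pi_G^+(\lambda)=\{\mu\in\Lambda^+:\lambda-\mu\in\mathbb{Q}_{\geq0}[\Delta]\}$; $\operatorname{Supp}(\lambda)=\{\alpha\in\Delta:\langle\lambda,\alpha^\vee\rangle\neq0\}$; $\Phi^+(\lambda)$ is the set of positive roots whose expression in simple roots involves some element of $\operatorname{Supp}(\lambda)$; $\nu\leqslant^\lambda_\mathbb{Q}\mu$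 iff $\mu-\nu\in\mathbb{Q}_{\geq0}[\Phi^+(\lambda)]$. Adjoint little brother: if $r\geqslant2$, $\alpha_{r-1}\notin\operatorname{Supp}(\lambda)$... more precisely, for the non-simply-laced diagram numbered from the extremal long root $\alpha_r$ (so that the first short root is $\alpha_{r-1}$), if $\alpha_{r-1}\notin\operatorname{Supp}(\lambda)$ and $\alpha_r\in\operatorname{Supp}(\lambda)$ then $\mathrm{LB}(\lambda)=\{\lambda-\alpha_{r-1}-\alpha_r\}$, and otherwise $\mathrm{LB}(\lambda)=\varnothing$ (also for $r=1$). $\mathrm{LB}_G(\lambda)$ is the set of elements of $(\Pi_G^+(\lambda)\smallsetminus\Pi^+(\lambda))\cup\mathrm{LB}(\lambda)$ maximal in this set w.r.t. $\leqslant^\lambda_\mathbb{Q}$. *)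

theory Defs
  imports Complex_Main
begin

text \<open>Concrete model of the root datum of G = Sp(2r) (type C_r) in epsilon-coordinates.
Weights are integer vectors indexed by 1..r, represented as functions nat => int vanishing
outside {1..r}. Simple roots (Bourbaki): alpha_i = eps_i - eps_(i+1) for i < r, alpha_r = 2 eps_r.
Simple coroots: alpha_i^vee = eps_i - eps_(i+1) for i < r, alpha_r^vee = eps_r.\<close>

type_synonym wt = "nat \<Rightarrow> int"

definition eps :: "nat \<Rightarrow> wt" where
  "eps i = (\<lambda>k. if k = i then 1 else 0)"

definition wadd :: "wt \<Rightarrow> wt \<Rightarrow> wt" where
  "wadd v w = (\<lambda>k. v k + w k)"

definition wsub :: "wt \<Rightarrow> wt \<Rightarrow> wt" where
  "wsub v w = (\<lambda>k. v k - w k)"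

definition is_weight :: "nat \<Rightarrow> wt \<Rightarrow> bool" where
  "is_weight r v \<longleftrightarrow> (\<forall>k. k \<notin> {1..r} \<longrightarrow> v k = 0)"

definition simple_root :: "nat \<Rightarrow> nat \<Rightarrow> wt" where
  "simple_root r i = (if i < r then wsub (eps i) (eps (Suc i)) else (\<lambda>k. 2 * eps r k))"

definition coroot_pair :: "nat \<Rightarrow> wt \<Rightarrow> nat \<Rightarrow> int" where
  "coroot_pair r v i = (if i < r then v i - v (Suc i) else v r)"

definition fund_weight :: "nat \<Rightarrow> wt" where
  "fund_weight i = (\<lambda>k. if 1 \<le> k \<and> k \<le> i then 1 else 0)"

definition dominant :: "nat \<Rightarrow> wt \<Rightarrow> bool" where
  "dominant r v \<longleftrightarrow> is_weight r v \<and> (\<forall>i\<in>{1..r}. coroot_pair r v i \<ge> 0)"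

text \<open>Supp(lambda), as a set of indices of simple roots\<close>
definition supp :: "nat \<Rightarrow> wt \<Rightarrow> nat set" where
  "supp r v = {i\<in>{1..r}. coroot_pair r v i \<noteq> 0}"

definition Delta :: "nat \<Rightarrow> wt set" where
  "Delta r = simple_root r ` {1..r}"

definition pos_roots :: "nat \<Rightarrow> wt set" where
  "pos_roots r =
     {wsub (eps i) (eps j) | i j. 1 \<le> i \<and> i < j \<and> j \<le> r}
   \<union> {wadd (eps i) (eps j) | i j. 1 \<le> i \<and> i < j \<and> j \<le> r}
   \<union> {(\<lambda>k. 2 * eps i k) | i. 1 \<le> i \<and> i \<le> r}"

definition involves :: "nat \<Rightarrow> wt \<Rightarrow> nat \<Rightarrow> bool" where
  "involves r \<beta> k \<longleftrightarrow>
     (\<exists>c :: nat \<Rightarrow> rat. (\<forall>m. of_int (\<beta> m) = (\<Sum>i\<in>{1..r}. c i * of_int (simple_root r i m)))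
        \<and> c k \<noteq> 0)"

definition pos_roots_lam :: "nat \<Rightarrow> wt \<Rightarrow> wt set" where
  "pos_roots_lam r lam = {\<beta>\<in>pos_roots r. \<exists>k\<in>supp r lam. involves r \<beta> k}"

definition cone_N :: "wt set \<Rightarrow> wt \<Rightarrow> bool" where
  "cone_N A v \<longleftrightarrow> (\<exists>c :: wt \<Rightarrow> nat. \<forall>m. v m = (\<Sum>a\<in>A. int (c a) * a m))"

definition cone_Q :: "wt set \<Rightarrow> wt \<Rightarrow> bool" where
  "cone_Q A v \<longleftrightarrow> (\<exists>c :: wt \<Rightarrow> rat. (\<forall>a\<in>A. c a \<ge> 0) \<and>
       (\<forall>m. of_int (v m) = (\<Sum>a\<in>A. c a * of_int (a m))))"

definition Pi_plus :: "nat \<Rightarrow> wt \<Rightarrow> wt set" where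
  "Pi_plus r lam = {\<mu>. dominant r \<mu> \<and> cone_N (Delta r) (wsub lam \<mu>)}"

definition Pi_plus_G :: "nat \<Rightarrow> wt \<Rightarrow> wt set" where
  "Pi_plus_G r lam = {\<mu>. dominant r \<mu> \<and> cone_Q (Delta r) (wsub lam \<mu>)}"

definition leQ :: "nat \<Rightarrow> wt \<Rightarrow> wt \<Rightarrow> wt \<Rightarrow> bool" where
  "leQ r lam \<nu> \<mu> \<longleftrightarrow> cone_Q (pos_roots_lam r lam) (wsub \<mu> \<nu>)"

text \<open>adjoint little brother: alpha_(r-1) the first short root, alpha_r the extremal long root\<close>
definition LB :: "nat \<Rightarrow> wt \<Rightarrow> wt set" where
  "LB r lam = (if 2 \<le> r \<and> r - 1 \<notin> supp r lam \<and> r \<in> supp r lam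
              then {wsub (wsub lam (simple_root r (r - 1))) (simple_root r r)} else {})"

definition LB_G :: "nat \<Rightarrow> wt \<Rightarrow> wt set" where
  "LB_G r lam =
    (let S = (Pi_plus_G r lam - Pi_plus r lam) \<union> LB r lam
     in {\<mu>\<in>S. \<forall>\<nu>\<in>S. leQ r lam \<mu> \<nu> \<longrightarrow> \<nu> = \<mu>})"

end

theory Submission
  imports Defs
begin


definition coneR :: "wt set \<Rightarrow> (nat \<Rightarrow> rat) \<Rightarrow> bool" where
  "coneR A v \<longleftrightarrow> (\<exists>c :: wt \<Rightarrow> rat. (\<forall>a\<in>A. c a \<ge> 0) \<and>
       (\<forall>m. v m = (\<Sum>a\<in>A. c a * of_int (a m))))"

lemma cone_Q_coneR: "cone_Q A v \<longleftrightarrow> coneR A (\<lambda>m. of_int (v m))"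
  by (simp add: cone_Q_def coneR_def)

lemma coneR_zero: "coneR A (\<lambda>m. 0)"
  unfolding coneR_def by (rule exI[of _ "\<lambda>_. 0"]) simp

lemma coneR_add: "coneR A u \<Longrightarrow> coneR A w \<Longrightarrow> coneR A (\<lambda>m. u m + w m)"
  unfolding coneR_def
proof (elim exE conjE)
  fix c d assume "\<forall>a\<in>A. 0 \<le> c a" "\<forall>m. u m = (\<Sum>a\<in>A. c a * of_int (a m))"
    "\<forall>a\<in>A. 0 \<le> d a" "\<forall>m. w m = (\<Sum>a\<in>A. d a * of_int (a m))"
  then show "\<exists>c. (\<forall>a\<in>A. 0 \<le> c a) \<and> (\<forall>m. u m + w m = (\<Sum>a\<in>A. c a * of_int (a m)))"
    by (intro exI[of _ "\<lambda>a. c a + d a"]) (simp add: sum.distrib distrib_right)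
qed

lemma coneR_scale: "0 \<le> t \<Longrightarrow> coneR A u \<Longrightarrow> coneR A (\<lambda>m. t * u m)"
  unfolding coneR_def
proof (elim exE conjE)
  fix c assume "0 \<le> t" "\<forall>a\<in>A. 0 \<le> c a" "\<forall>m. u m = (\<Sum>a\<in>A. c a * of_int (a m))"
  then show "\<exists>c. (\<forall>a\<in>A. 0 \<le> c a) \<and> (\<forall>m. t * u m = (\<Sum>a\<in>A. c a * of_int (a m)))"
    by (intro exI[of _ "\<lambda>a. t * c a"]) (simp add: sum_distrib_left mult.assoc)
qed

lemma coneR_mem: "finite A \<Longrightarrow> a \<in> A \<Longrightarrow> coneR A (\<lambda>m. of_int (a m))"
  unfolding coneR_def
proof (intro exI[of _ "\<lambda>b. if b = a then 1 else 0"] conjI allI)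
  fix m assume "finite A" "a \<in> A"
  have "(\<Sum>b\<in>A. (if b = a then 1 else 0) * (of_int (b m)::rat)) = (\<Sum>b\<in>A. if b = a then of_int (b m) else 0)"
    by (rule sum.cong) auto
  then show "of_int (a m) = (\<Sum>b\<in>A. (if b = a then 1 else 0) * (of_int (b m)::rat))"
    using \<open>finite A\<close> \<open>a \<in> A\<close> by (simp add: sum.delta)
qed auto

lemma coneR_sum: "finite I \<Longrightarrow> (\<And>i. i \<in> I \<Longrightarrow> coneR A (f i)) \<Longrightarrow> coneR A (\<lambda>m. \<Sum>i\<in>I. f i m)"
proof (induction I rule: finite_induct)
  case empty then show ?case by (simp add: coneR_zero)
next
  case (insert x F)
  then show ?case using coneR_add[of A "f x" "\<lambda>m. \<Sum>i\<in>F. f i m"] by simp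
qed

lemma coneR_ext: "coneR A u \<Longrightarrow> (\<And>m. u m = w m) \<Longrightarrow> coneR A w"
proof -
  assume "coneR A u" "\<And>m. u m = w m"
  then have "u = w" by auto
  with \<open>coneR A u\<close> show ?thesis by simp
qed

lemma coneN_zero: "cone_N A (\<lambda>m. 0)"
  unfolding cone_N_def by (rule exI[of _ "\<lambda>_. 0"]) simp

lemma coneN_add: "cone_N A u \<Longrightarrow> cone_N A w \<Longrightarrow> cone_N A (\<lambda>m. u m + w m)"
  unfolding cone_N_def
proof (elim exE)
  fix c d assume "\<forall>m. u m = (\<Sum>a\<in>A. int (c a) * a m)" "\<forall>m. w m = (\<Sum>a\<in>A. int (d a) * a m)"
  then show "\<exists>c. \<forall>m. u m + w m = (\<Sum>a\<in>A. int (c a) * a m)"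
    by (intro exI[of _ "\<lambda>a. c a + d a"]) (simp add: sum.distrib distrib_right)
qed

lemma coneN_scale: "cone_N A u \<Longrightarrow> cone_N A (\<lambda>m. int t * u m)"
  unfolding cone_N_def
proof (elim exE)
  fix c assume "\<forall>m. u m = (\<Sum>a\<in>A. int (c a) * a m)"
  then show "\<exists>c. \<forall>m. int t * u m = (\<Sum>a\<in>A. int (c a) * a m)"
    by (intro exI[of _ "\<lambda>a. t * c a"]) (simp add: sum_distrib_left mult.assoc)
qed

lemma coneN_mem: "finite A \<Longrightarrow> a \<in> A \<Longrightarrow> cone_N A a"
  unfolding cone_N_def
proof (intro exI[of _ "\<lambda>b. if b = a then 1 else 0"] allI)
  fix m assume "finite A" "a \<in> A"
  have "(\<Sum>b\<in>A. int (if b = a then 1 else 0) * b m) = (\<Sum>b\<in>A. if b = a then b m else 0)"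
    by (rule sum.cong) auto
  then show "a m = (\<Sum>b\<in>A. int (if b = a then 1 else 0) * b m)"
    using \<open>finite A\<close> \<open>a \<in> A\<close> by (simp add: sum.delta)
qed

lemma coneN_sum: "finite I \<Longrightarrow> (\<And>i. i \<in> I \<Longrightarrow> cone_N A (f i)) \<Longrightarrow> cone_N A (\<lambda>m. \<Sum>i\<in>I. f i m)"
proof (induction I rule: finite_induct)
  case empty then show ?case by (simp add: coneN_zero)
next
  case (insert x F)
  then show ?case using coneN_add[of A "f x" "\<lambda>m. \<Sum>i\<in>F. f i m"] by simp
qed

lemma coneN_ext: "cone_N A u \<Longrightarrow> (\<And>m. u m = w m) \<Longrightarrow> cone_N A w"
proof -
  assume "cone_N A u" "\<And>m. u m = w m"
  then have "u = w" by auto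
  with \<open>cone_N A u\<close> show ?thesis by simp
qed




definition xp :: "wt \<Rightarrow> nat \<Rightarrow> int" where "xp x i = max (x i) 0"
definition xn :: "wt \<Rightarrow> nat \<Rightarrow> int" where "xn x i = max (- x i) 0"
definition Fp :: "wt \<Rightarrow> nat \<Rightarrow> int" where "Fp x k = (\<Sum>i\<in>{1..k}. xp x i)"
definition Fm :: "wt \<Rightarrow> nat \<Rightarrow> int" where "Fm x k = (\<Sum>i\<in>{1..k}. xn x i)"
definition ovl :: "int \<Rightarrow> int \<Rightarrow> int \<Rightarrow> int \<Rightarrow> int" where
  "ovl a b c d = max 0 (min b d - max a c)"
definition gam :: "wt \<Rightarrow> nat \<Rightarrow> nat \<Rightarrow> int" where
  "gam x i j = ovl (Fp x (i-1)) (Fp x i) (Fm x (j-1)) (Fm x j)"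
definition ell :: "wt \<Rightarrow> nat \<Rightarrow> nat \<Rightarrow> int" where
  "ell x r i = ovl (Fp x (i-1)) (Fp x i) 0 (Fm x r)"

lemma Fp_0[simp]: "Fp x 0 = 0" by (simp add: Fp_def)
lemma Fm_0[simp]: "Fm x 0 = 0" by (simp add: Fm_def)
lemma Fp_Suc: "Fp x (Suc k) = Fp x k + xp x (Suc k)" by (simp add: Fp_def)
lemma Fm_Suc: "Fm x (Suc k) = Fm x k + xn x (Suc k)" by (simp add: Fm_def)
lemma xp_ge: "0 \<le> xp x i" by (simp add: xp_def)
lemma xn_ge: "0 \<le> xn x i" by (simp add: xn_def)
lemma Fp_mono: "a \<le> b \<Longrightarrow> Fp x a \<le> Fp x b"
  by (induction b rule: dec_induct) (auto simp: Fp_Suc xp_ge intro: order_trans)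
lemma Fm_mono: "a \<le> b \<Longrightarrow> Fm x a \<le> Fm x b"
  by (induction b rule: dec_induct) (auto simp: Fm_Suc xn_ge intro: order_trans)
lemma Fp_ge: "0 \<le> Fp x a" using Fp_mono[of 0 a x] by simp
lemma Fm_ge: "0 \<le> Fm x a" using Fm_mono[of 0 a x] by simp
lemma Fp_pred: "1 \<le> i \<Longrightarrow> Fp x i = Fp x (i-1) + xp x i"
  using Fp_Suc[of x "i-1"] by simp
lemma Fm_pred: "1 \<le> i \<Longrightarrow> Fm x i = Fm x (i-1) + xn x i"
  using Fm_Suc[of x "i-1"] by simp
lemma psum_F: "(\<Sum>i\<in>{1..k}. x i) = Fp x k - Fm x k"
proof -
  have "(\<Sum>i\<in>{1..k}. x i) = (\<Sum>i\<in>{1..k}. xp x i - xn x i)"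
    by (rule sum.cong) (auto simp: xp_def xn_def)
  then show ?thesis by (simp add: Fp_def Fm_def sum_subtractf)
qed

lemma ovl_add: "c \<le> d \<Longrightarrow> d \<le> e \<Longrightarrow> ovl a b c d + ovl a b d e = ovl a b c e"
  unfolding ovl_def by (auto simp: max_def min_def)
lemma ovl_sym: "ovl a b c d = ovl c d a b"
  unfolding ovl_def by (auto simp: max_def min_def)
lemma ovl_ge: "0 \<le> ovl a b c d" unfolding ovl_def by simp

lemma tele:
  assumes "\<And>k. c k \<le> c (Suc k)"
  shows "(\<Sum>j\<in>{1..n}. ovl a b (c (j-1)) (c j)) = ovl a b (c 0) (c n)"
proof (induction n)
  case 0 then show ?case by (simp add: ovl_def)
next
  case (Suc n)
  have m: "c 0 \<le> c n" using lift_Suc_mono_le[of c 0 n] assms by simp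
  have "(\<Sum>j\<in>{1..Suc n}. ovl a b (c (j-1)) (c j)) = ovl a b (c 0) (c n) + ovl a b (c n) (c (Suc n))"
    using Suc by simp
  also have "\<dots> = ovl a b (c 0) (c (Suc n))" using ovl_add m assms by blast
  finally show ?case .
qed

lemma row_sum: "(\<Sum>j\<in>{1..r}. gam x i j) = ell x r i"
proof -
  have "(\<Sum>j\<in>{1..r}. gam x i j) = (\<Sum>j\<in>{1..r}. ovl (Fp x (i-1)) (Fp x i) (Fm x (j-1)) (Fm x j))"
    by (simp add: gam_def)
  also have "\<dots> = ovl (Fp x (i-1)) (Fp x i) (Fm x 0) (Fm x r)"
    by (rule tele) (simp add: Fm_Suc xn_ge)
  finally show ?thesis by (simp add: ell_def)
qed

lemma col_sum:
  assumes "1 \<le> j" "j \<le> r" "Fm x r \<le> Fp x r"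
  shows "(\<Sum>i\<in>{1..r}. gam x i j) = xn x j"
proof -
  have "(\<Sum>i\<in>{1..r}. gam x i j) = (\<Sum>i\<in>{1..r}. ovl (Fm x (j-1)) (Fm x j) (Fp x (i-1)) (Fp x i))"
    by (simp add: gam_def ovl_sym)
  also have "\<dots> = ovl (Fm x (j-1)) (Fm x j) (Fp x 0) (Fp x r)"
    by (rule tele) (simp add: Fp_Suc xp_ge)
  also have "\<dots> = xn x j"
  proof -
    have "Fm x j \<le> Fm x r" using Fm_mono assms by blast
    moreover have "0 \<le> Fm x (j-1)" by (rule Fm_ge)
    moreover have "Fm x j = Fm x (j-1) + xn x j" using Fm_pred assms by blast
    ultimately show ?thesis using assms xn_ge[of x j] by (simp add: ovl_def max_def min_def)
  qed
  finally show ?thesis .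
qed

lemma sum_eps: "(\<Sum>i\<in>{1..r}. f i * eps i m) = (if m \<in> {1..r} then f m else 0)"
proof -
  have "(\<Sum>i\<in>{1..r}. f i * eps i m) = (\<Sum>i\<in>{1..r}. if m = i then f i else 0)"
    by (rule sum.cong) (auto simp: eps_def)
  then show ?thesis by (simp add: sum.delta)
qed

lemma sum_eps_rat: "(\<Sum>i\<in>{1..r}. (f i :: rat) * of_int (eps i m)) = (if m \<in> {1..r} then f m else 0)"
proof -
  have "(\<Sum>i\<in>{1..r}. f i * of_int (eps i m)) = (\<Sum>i\<in>{1..r}. if m = i then f i else 0)"
    by (rule sum.cong) (auto simp: eps_def)
  then show ?thesis by (simp add: sum.delta)
qed

lemma gam_pos:
  assumes "0 < gam x i j" "1 \<le> i" "1 \<le> j" "\<forall>k. 0 \<le> Fp x k - Fm x k"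
  shows "i < j" "0 < x i" "x j < 0"
proof -
  have g: "Fp x (i-1) < Fp x i" "Fm x (j-1) < Fm x j" "Fp x (i-1) < Fm x j"
    using assms(1) unfolding gam_def ovl_def by (auto simp: max_def min_def split: if_splits)
  have "0 < xp x i" using g(1) Fp_pred[OF assms(2)] by simp
  then show xi: "0 < x i" by (simp add: xp_def)
  have "0 < xn x j" using g(2) Fm_pred[OF assms(3)] by simp
  then show xj: "x j < 0" by (simp add: xn_def)
  have "xp x j = 0" using xj by (simp add: xp_def)
  then have "Fp x j = Fp x (j-1)" using Fp_pred[OF assms(3)] by simp
  then have "Fm x j \<le> Fp x (j-1)" using assms(4) by (metis diff_ge_0_iff_ge)
  with g(3) have "Fp x (i-1) < Fp x (j-1)" by simp
  then have "\<not> (j - 1 \<le> i - 1)" using Fp_mono by (metis not_le)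
  then show "i < j" by simp
qed




lemma transport:
  assumes fin: "finite A"
    and supp0: "\<forall>m. m \<notin> {1..r} \<longrightarrow> x m = 0"
    and ps: "\<forall>k\<le>r. 0 \<le> (\<Sum>i\<in>{1..k}. x i)"
    and pairs: "\<forall>i j. 1 \<le> i \<longrightarrow> i < j \<longrightarrow> j \<le> r \<longrightarrow> 0 < x i \<longrightarrow> x j < 0 \<longrightarrow> wsub (eps i) (eps j) \<in> A"
    and dbl: "\<forall>i. 1 \<le> i \<longrightarrow> i \<le> r \<longrightarrow> 0 < x i \<longrightarrow> (\<lambda>k. 2 * eps i k) \<in> A"
  shows "coneR A (\<lambda>m. of_int (x m))"
proof -
  define I where "I = {1..r}"
  have psk: "\<forall>k. 0 \<le> Fp x k - Fm x k"
  proof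
    fix k
    show "0 \<le> Fp x k - Fm x k"
    proof (cases "k \<le> r")
      case True
      then have "0 \<le> (\<Sum>i\<in>{1..k}. x i)" using ps by blast
      then show ?thesis using psum_F[of x k] by simp
    next
      case False
      have "{1..k} = {1..r} \<union> {Suc r..k}" using False by auto
      then have "(\<Sum>i\<in>{1..k}. x i) = (\<Sum>i\<in>{1..r}. x i) + (\<Sum>i\<in>{Suc r..k}. x i)"
        by (simp add: sum.union_disjoint)
      also have "(\<Sum>i\<in>{Suc r..k}. x i) = 0" using supp0 by (intro sum.neutral) auto
      finally have "(\<Sum>i\<in>{1..k}. x i) = (\<Sum>i\<in>{1..r}. x i)" by simp
      moreover have "0 \<le> (\<Sum>i\<in>{1..r}. x i)" using ps by blast
      ultimately show ?thesis using psum_F[of x k] by simp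
    qed
  qed
  have rr: "Fm x r \<le> Fp x r" using psk by (metis diff_ge_0_iff_ge)
  define T1 where "T1 = (\<lambda>m. \<Sum>i\<in>I. \<Sum>j\<in>I. (of_int (gam x i j)::rat) * of_int (wsub (eps i) (eps j) m))"
  define T2 where "T2 = (\<lambda>m. \<Sum>i\<in>I. (of_int (xp x i - ell x r i) / 2 :: rat) * of_int (2 * eps i m))"
  have c1: "coneR A T1"
    unfolding T1_def
  proof (intro coneR_sum)
    fix i j assume i: "i \<in> I" and j: "j \<in> I"
    show "coneR A (\<lambda>m. (of_int (gam x i j)::rat) * of_int (wsub (eps i) (eps j) m))"
    proof (cases "gam x i j = 0")
      case True then show ?thesis by (intro coneR_ext[OF coneR_zero]) simp
    next
      case False
      then have "0 < gam x i j" using ovl_ge[of _ _ _ _] unfolding gam_def by (metis order_le_neq_trans)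
      note gp = gam_pos[OF this _ _ psk]
      have "wsub (eps i) (eps j) \<in> A" using pairs gp i j by (auto simp: I_def)
      then show ?thesis using coneR_mem[OF fin] by (intro coneR_scale) (auto simp: gam_def ovl_ge)
    qed
  qed (auto simp: I_def)
  have c2: "coneR A T2"
    unfolding T2_def
  proof (intro coneR_sum)
    fix i assume i: "i \<in> I"
    have le: "ell x r i \<le> xp x i"
    proof -
      have "1 \<le> i" using i by (simp add: I_def)
      then have "Fp x i = Fp x (i-1) + xp x i" by (rule Fp_pred)
      then show ?thesis using Fp_ge[of x "i-1"] xp_ge[of x i] unfolding ell_def ovl_def by (simp add: max_def min_def)
    qed
    show "coneR A (\<lambda>m. (of_int (xp x i - ell x r i) / 2 :: rat) * of_int (2 * eps i m))"
    proof (cases "xp x i - ell x r i = 0")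
      case True then show ?thesis by (intro coneR_ext[OF coneR_zero]) simp
    next
      case False
      moreover have "0 \<le> ell x r i" unfolding ell_def by (rule ovl_ge)
      ultimately have "0 < xp x i" using le by linarith
      then have "0 < x i" by (simp add: xp_def)
      then have "(\<lambda>k. 2 * eps i k) \<in> A" using dbl i by (auto simp: I_def)
      then show ?thesis using coneR_mem[OF fin, of "\<lambda>k. 2 * eps i k"] le by (intro coneR_scale) auto
    qed
  qed (auto simp: I_def)
  have id: "of_int (x m) = T1 m + T2 m" for m
  proof -
    have "T1 m = (\<Sum>i\<in>I. \<Sum>j\<in>I. (of_int (gam x i j)::rat) * of_int (eps i m))
               - (\<Sum>i\<in>I. \<Sum>j\<in>I. (of_int (gam x i j)::rat) * of_int (eps j m))"
      unfolding T1_def by (simp add: wsub_def algebra_simps sum_subtractf)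
    also have "(\<Sum>i\<in>I. \<Sum>j\<in>I. (of_int (gam x i j)::rat) * of_int (eps i m))
        = (\<Sum>i\<in>I. (of_int (\<Sum>j\<in>I. gam x i j)) * of_int (eps i m))"
      by (simp add: sum_distrib_right)
    also have "\<dots> = (\<Sum>i\<in>I. (of_int (ell x r i)) * of_int (eps i m))"
      by (intro sum.cong refl) (simp only: row_sum I_def)
    also have "\<dots> = (if m \<in> I then of_int (ell x r m) else 0)"
      unfolding I_def by (rule sum_eps_rat)
    also have "(\<Sum>i\<in>I. \<Sum>j\<in>I. (of_int (gam x i j)::rat) * of_int (eps j m))
        = (\<Sum>j\<in>I. \<Sum>i\<in>I. (of_int (gam x i j)::rat) * of_int (eps j m))"
      by (rule sum.swap)
    also have "\<dots> = (\<Sum>j\<in>I. (of_int (\<Sum>i\<in>I. gam x i j)) * of_int (eps j m))"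
      by (simp add: sum_distrib_right)
    also have "\<dots> = (\<Sum>j\<in>I. (of_int (xn x j)) * of_int (eps j m))"
    proof (intro sum.cong refl)
      fix j assume "j \<in> I"
      then have "(\<Sum>i\<in>I. gam x i j) = xn x j" unfolding I_def using col_sum rr by simp
      then show "of_int (\<Sum>i\<in>I. gam x i j) * (of_int (eps j m)::rat) = of_int (xn x j) * of_int (eps j m)"
        by (simp only:)
    qed
    also have "\<dots> = (if m \<in> I then of_int (xn x m) else 0)"
      unfolding I_def by (rule sum_eps_rat)
    finally have t1: "T1 m = (if m \<in> I then of_int (ell x r m) else 0) - (if m \<in> I then of_int (xn x m) else 0)" .
    have "T2 m = (\<Sum>i\<in>I. (of_int (xp x i - ell x r i)) * of_int (eps i m))"
      unfolding T2_def by (intro sum.cong refl) simp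
    also have "\<dots> = (if m \<in> I then of_int (xp x m - ell x r m) else 0)"
      unfolding I_def by (rule sum_eps_rat)
    finally have t2: "T2 m = \<dots>" .
    show ?thesis
    proof (cases "m \<in> I")
      case True then show ?thesis using t1 t2 by (simp add: xp_def xn_def)
    next
      case False
      then have "x m = 0" using supp0 unfolding I_def by blast
      then show ?thesis using t1 t2 False by simp
    qed
  qed
  show ?thesis using coneR_add[OF c1 c2] by (rule coneR_ext) (simp add: id)
qed




lemma eps_app: "eps i m = (if m = i then 1 else 0)" by (simp add: eps_def)

lemma finite_pos_roots: "finite (pos_roots r)"
proof -
  have "pos_roots r \<subseteq> (\<lambda>(i,j). wsub (eps i) (eps j)) ` ({1..r} \<times> {1..r})
      \<union> (\<lambda>(i,j). wadd (eps i) (eps j)) ` ({1..r} \<times> {1..r}) \<union> (\<lambda>i. (\<lambda>k. 2 * eps i k)) ` {1..r}"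
    unfolding pos_roots_def by fastforce
  then show ?thesis by (rule finite_subset) auto
qed

lemma finite_pos_roots_lam: "finite (pos_roots_lam r lam)"
  using finite_pos_roots by (rule finite_subset[rotated]) (auto simp: pos_roots_lam_def)

lemma sum_restrict:
  assumes "finite S" "{a..<b} \<subseteq> S"
  shows "(\<Sum>l\<in>S. (if a \<le> l \<and> l < b then (1::rat) else 0) * g l) = (\<Sum>l\<in>{a..<b}. g l)"
proof -
  have "(\<Sum>l\<in>S. (if a \<le> l \<and> l < b then (1::rat) else 0) * g l) = (\<Sum>l\<in>S. if l \<in> {a..<b} then g l else 0)"
    by (rule sum.cong) auto
  also have "\<dots> = (\<Sum>l\<in>S \<inter> {a..<b}. g l)" using assms(1) by (simp add: sum.inter_restrict)
  also have "S \<inter> {a..<b} = {a..<b}" using assms(2) by blast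
  finally show ?thesis .
qed

lemma tele2:
  assumes "a \<le> b"
  shows "(\<Sum>l\<in>{a..<b}. (g l::rat) - g (Suc l)) = g a - g b"
proof -
  have "(\<Sum>l\<in>{a..<b}. g l - g (Suc l)) = - (\<Sum>l\<in>{a..<b}. g (Suc l) - g l)"
    by (simp add: sum_negf[symmetric])
  also have "\<dots> = g a - g b" using sum_Suc_diff'[OF assms, of g] by simp
  finally show ?thesis .
qed

lemma involves_diff:
  assumes "1 \<le> i" "i \<le> k" "k < j" "j \<le> r"
  shows "involves r (wsub (eps i) (eps j)) k"
  unfolding involves_def
proof (intro exI[of _ "\<lambda>l. if i \<le> l \<and> l < j then (1::rat) else 0"] conjI allI)
  fix m
  have "(\<Sum>l\<in>{1..r}. (if i \<le> l \<and> l < j then (1::rat) else 0) * of_int (simple_root r l m))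
      = (\<Sum>l\<in>{i..<j}. of_int (simple_root r l m))"
    using assms by (intro sum_restrict) auto
  also have "\<dots> = (\<Sum>l\<in>{i..<j}. (of_int (eps l m)::rat) - of_int (eps (Suc l) m))"
    using assms by (intro sum.cong refl) (simp add: simple_root_def wsub_def)
  also have "\<dots> = of_int (eps i m) - of_int (eps j m)"
    using assms by (intro tele2) auto
  finally show "of_int (wsub (eps i) (eps j) m) =
      (\<Sum>l\<in>{1..r}. (if i \<le> l \<and> l < j then (1::rat) else 0) * of_int (simple_root r l m))"
    by (simp add: wsub_def)
qed (use assms in auto)

lemma involves_dbl:
  assumes "1 \<le> i" "i \<le> k" "k \<le> r"
  shows "involves r (\<lambda>m. 2 * eps i m) k"
  unfolding involves_def
proof (intro exI[of _ "\<lambda>l. if i \<le> l \<and> l < r then (2::rat) else if l = r then 1 else 0"] conjI allI)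
  fix m
  have "{1..r} = {1..<r} \<union> {r}" using assms by auto
  then have "(\<Sum>l\<in>{1..r}. (if i \<le> l \<and> l < r then (2::rat) else if l = r then 1 else 0) * of_int (simple_root r l m))
      = (\<Sum>l\<in>{1..<r}. (if i \<le> l \<and> l < r then (2::rat) else if l = r then 1 else 0) * of_int (simple_root r l m))
        + of_int (simple_root r r m)"
    by (simp add: sum.union_disjoint)
  also have "(\<Sum>l\<in>{1..<r}. (if i \<le> l \<and> l < r then (2::rat) else if l = r then 1 else 0) * of_int (simple_root r l m))
      = 2 * (\<Sum>l\<in>{1..<r}. (if i \<le> l \<and> l < r then (1::rat) else 0) * of_int (simple_root r l m))"
    by (simp add: sum_distrib_left) (intro sum.cong refl, auto)
  also have "(\<Sum>l\<in>{1..<r}. (if i \<le> l \<and> l < r then (1::rat) else 0) * of_int (simple_root r l m))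
      = (\<Sum>l\<in>{i..<r}. of_int (simple_root r l m))"
    using assms by (intro sum_restrict) auto
  also have "\<dots> = (\<Sum>l\<in>{i..<r}. (of_int (eps l m)::rat) - of_int (eps (Suc l) m))"
    using assms by (intro sum.cong refl) (simp add: simple_root_def wsub_def)
  also have "\<dots> = of_int (eps i m) - of_int (eps r m)"
    using assms by (intro tele2) auto
  finally show "of_int (2 * eps i m) =
      (\<Sum>l\<in>{1..r}. (if i \<le> l \<and> l < r then (2::rat) else if l = r then 1 else 0) * of_int (simple_root r l m))"
    by (simp add: simple_root_def algebra_simps)
qed (use assms in auto)

lemma supp_between:
  assumes "1 \<le> i" "i < j" "j \<le> r" "lam i \<noteq> lam j"
  shows "\<exists>k\<in>supp r lam. i \<le> k \<and> k < j"
proof (rule ccontr)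
  assume "\<not> ?thesis"
  then have h: "\<And>k. i \<le> k \<Longrightarrow> k < j \<Longrightarrow> lam k = lam (Suc k)"
    using assms unfolding supp_def coroot_pair_def by fastforce
  have "i + n \<le> j \<longrightarrow> lam (i + n) = lam i" for n
  proof (induction n)
    case (Suc n)
    then show ?case using h[of "i + n"] by auto
  qed simp
  from this[of "j - i"] assms show False by simp
qed

lemma supp_above:
  assumes "1 \<le> i" "i \<le> r" "lam i \<noteq> 0"
  shows "\<exists>k\<in>supp r lam. i \<le> k"
proof (cases "lam r = 0")
  case True
  then have "i < r" using assms by (cases "i = r") auto
  then show ?thesis using supp_between[of i r r lam] assms True by fastforce
next
  case False
  then have "r \<in> supp r lam" using assms by (simp add: supp_def coroot_pair_def)
  then show ?thesis using assms by blast
qed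

lemma diff_mem:
  assumes "1 \<le> i" "i < j" "j \<le> r" "lam i \<noteq> lam j"
  shows "wsub (eps i) (eps j) \<in> pos_roots_lam r lam"
proof -
  obtain k where k: "k \<in> supp r lam" "i \<le> k" "k < j" using supp_between[OF assms] by blast
  have "wsub (eps i) (eps j) \<in> pos_roots r" unfolding pos_roots_def using assms by blast
  moreover have "involves r (wsub (eps i) (eps j)) k" using involves_diff assms k by blast
  ultimately show ?thesis unfolding pos_roots_lam_def using k by blast
qed

lemma dbl_mem:
  assumes "1 \<le> i" "i \<le> r" "lam i \<noteq> 0"
  shows "(\<lambda>m. 2 * eps i m) \<in> pos_roots_lam r lam"
proof -
  obtain k where k: "k \<in> supp r lam" "i \<le> k" using supp_above[of i r lam] assms by blast
  have kr: "k \<le> r" using k by (simp add: supp_def)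
  have "(\<lambda>m. 2 * eps i m) \<in> pos_roots r" unfolding pos_roots_def using assms by blast
  moreover have "involves r (\<lambda>m. 2 * eps i m) k" using involves_dbl assms k kr by blast
  ultimately show ?thesis unfolding pos_roots_lam_def using k by blast
qed




lemma sum_epsS: "finite S \<Longrightarrow> (\<Sum>l\<in>S. f l * eps l m) = (if m \<in> S then f m else (0::int))"
proof -
  assume "finite S"
  have "(\<Sum>l\<in>S. f l * eps l m) = (\<Sum>l\<in>S. if m = l then f l else 0)"
    by (rule sum.cong) (auto simp: eps_def)
  then show ?thesis using \<open>finite S\<close> by (simp add: sum.delta)
qed

lemma sum_epsS_rat: "finite S \<Longrightarrow> (\<Sum>l\<in>S. (f l::rat) * of_int (eps l m)) = (if m \<in> S then f m else 0)"
proof -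
  assume "finite S"
  have "(\<Sum>l\<in>S. f l * of_int (eps l m)) = (\<Sum>l\<in>S. if m = l then f l else 0)"
    by (rule sum.cong) (auto simp: eps_def)
  then show ?thesis using \<open>finite S\<close> by (simp add: sum.delta)
qed

lemma sum_eps2: "finite S \<Longrightarrow> (\<Sum>k\<in>S. (w k::rat) * of_int (eps i k)) = (if i \<in> S then w i else 0)"
proof -
  assume "finite S"
  have "(\<Sum>k\<in>S. w k * of_int (eps i k)) = (\<Sum>k\<in>S. if k = i then w k else 0)"
    by (rule sum.cong) (auto simp: eps_def)
  then show ?thesis using \<open>finite S\<close> by (simp add: sum.delta')
qed

lemma sum_eps_int2: "finite S \<Longrightarrow> (\<Sum>k\<in>S. eps i k) = (if i \<in> S then 1 else 0)"
proof -
  assume "finite S"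
  have "(\<Sum>k\<in>S. eps i k) = (\<Sum>k\<in>S. if k = i then 1 else 0)"
    by (rule sum.cong) (auto simp: eps_def)
  then show ?thesis using \<open>finite S\<close> by (simp add: sum.delta')
qed

definition wfun :: "nat \<Rightarrow> wt \<Rightarrow> rat" where
  "wfun r v = (\<Sum>k\<in>{1..r}. of_nat (r + 1 - k) * of_int (v k))"

lemma wfun_pos: assumes "\<beta> \<in> pos_roots r" shows "0 < wfun r \<beta>"
proof -
  have e: "wfun r (eps i) = of_nat (r + 1 - i)" if "1 \<le> i" "i \<le> r" for i
    using that unfolding wfun_def by (subst sum_eps2) auto
  have lin1: "wfun r (wsub u v) = wfun r u - wfun r v" for u v
    unfolding wfun_def wsub_def by (simp add: right_diff_distrib sum_subtractf)
  have lin2: "wfun r (wadd u v) = wfun r u + wfun r v" for u v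
    unfolding wfun_def wadd_def by (simp add: distrib_left sum.distrib)
  have lin3: "wfun r (\<lambda>k. 2 * u k) = 2 * wfun r u" for u
    unfolding wfun_def by (simp add: sum_distrib_left mult.left_commute)
  from assms show ?thesis unfolding pos_roots_def
  proof (elim UnE CollectE exE conjE)
    fix i j assume "\<beta> = wsub (eps i) (eps j)" "1 \<le> i" "i < j" "j \<le> r"
    then show ?thesis by (simp add: lin1 e of_nat_diff)
  next
    fix i j assume "\<beta> = wadd (eps i) (eps j)" "1 \<le> i" "i < j" "j \<le> r"
    then show ?thesis by (simp add: lin2 e)
  next
    fix i assume "\<beta> = (\<lambda>k. 2 * eps i k)" "1 \<le> i" "i \<le> r"
    then show ?thesis by (simp add: lin3 e)
  qed
qed

lemma antisym_cone:
  assumes fin: "finite A" and sub: "A \<subseteq> pos_roots r"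
    and c1: "coneR A u" and c2: "coneR A (\<lambda>m. - u m)"
  shows "u m = 0"
proof -
  obtain c where c: "\<forall>a\<in>A. 0 \<le> c a" "\<forall>m. u m = (\<Sum>a\<in>A. c a * of_int (a m))"
    using c1 unfolding coneR_def by blast
  obtain d where d: "\<forall>a\<in>A. 0 \<le> d a" "\<forall>m. - u m = (\<Sum>a\<in>A. d a * of_int (a m))"
    using c2 unfolding coneR_def by blast
  have z: "(\<Sum>a\<in>A. (c a + d a) * of_int (a k)) = 0" for k
    using c(2) d(2)[rule_format, of k] by (simp add: distrib_right sum.distrib)
  have "0 = (\<Sum>k\<in>{1..r}. of_nat (r + 1 - k) * (\<Sum>a\<in>A. (c a + d a) * of_int (a k)))"
    by (simp add: z)
  also have "\<dots> = (\<Sum>k\<in>{1..r}. \<Sum>a\<in>A. of_nat (r + 1 - k) * ((c a + d a) * of_int (a k)))"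
    by (simp add: sum_distrib_left)
  also have "\<dots> = (\<Sum>a\<in>A. \<Sum>k\<in>{1..r}. of_nat (r + 1 - k) * ((c a + d a) * of_int (a k)))"
    by (rule sum.swap)
  also have "\<dots> = (\<Sum>a\<in>A. (c a + d a) * wfun r a)"
    unfolding wfun_def by (simp add: sum_distrib_left mult.left_commute)
  finally have s0: "(\<Sum>a\<in>A. (c a + d a) * wfun r a) = 0" by simp
  have nn: "\<forall>a\<in>A. 0 \<le> (c a + d a) * wfun r a"
  proof
    fix a assume a: "a \<in> A"
    then have "0 < wfun r a" using wfun_pos sub by blast
    then show "0 \<le> (c a + d a) * wfun r a" using c(1) d(1) a by (intro mult_nonneg_nonneg) auto
  qed
  have "\<forall>a\<in>A. (c a + d a) * wfun r a = 0"
    using sum_nonneg_eq_0_iff[OF fin, of "\<lambda>a. (c a + d a) * wfun r a"] nn s0 by simp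
  have "\<forall>a\<in>A. c a = 0"
  proof
    fix a assume a: "a \<in> A"
    then have "0 < wfun r a" using wfun_pos sub by blast
    moreover have "(c a + d a) * wfun r a = 0" using a \<open>\<forall>a\<in>A. (c a + d a) * wfun r a = 0\<close> by blast
    ultimately have "c a + d a = 0" by (simp add: mult_eq_0_iff)
    moreover have "0 \<le> c a" "0 \<le> d a" using c(1) d(1) a by auto
    ultimately show "c a = 0" by linarith
  qed
  then have "(\<Sum>a\<in>A. c a * of_int (a m)) = 0" by (intro sum.neutral) simp
  then show ?thesis using c(2) by metis
qed




lemma finite_Delta: "finite (Delta r)" by (simp add: Delta_def)

lemma simple_in_Delta: "l \<in> {1..r} \<Longrightarrow> simple_root r l \<in> Delta r" by (simp add: Delta_def)

lemma psum_simple: assumes "1 \<le> l" shows "0 \<le> (\<Sum>i\<in>{1..k}. simple_root r l i)"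
proof (cases "l < r")
  case True
  then have "(\<Sum>i\<in>{1..k}. simple_root r l i) = (\<Sum>i\<in>{1..k}. eps l i) - (\<Sum>i\<in>{1..k}. eps (Suc l) i)"
    by (simp add: simple_root_def wsub_def sum_subtractf)
  also have "\<dots> = (if l \<in> {1..k} then 1 else 0) - (if Suc l \<in> {1..k} then 1 else 0)"
    by (simp add: sum_eps_int2)
  finally show ?thesis using assms by auto
next
  case False
  then have "(\<Sum>i\<in>{1..k}. simple_root r l i) = 2 * (\<Sum>i\<in>{1..k}. eps r i)"
    by (simp add: simple_root_def sum_distrib_left)
  also have "\<dots> = 2 * (if r \<in> {1..k} then 1 else 0)"
    by (simp add: sum_eps_int2)
  finally show ?thesis by auto
qed

lemma tsum_simple: "l \<in> {1..r} \<Longrightarrow> even (\<Sum>i\<in>{1..r}. simple_root r l i)"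
proof (cases "l < r")
  case True
  assume l: "l \<in> {1..r}"
  then have "(\<Sum>i\<in>{1..r}. simple_root r l i) = (\<Sum>i\<in>{1..r}. eps l i) - (\<Sum>i\<in>{1..r}. eps (Suc l) i)"
    using True by (simp add: simple_root_def wsub_def sum_subtractf)
  also have "\<dots> = 0"
    using l True by (simp add: sum_eps_int2)
  finally show ?thesis by simp
next
  case False
  then have "(\<Sum>i\<in>{1..r}. simple_root r l i) = 2 * (\<Sum>i\<in>{1..r}. eps r i)"
    by (simp add: simple_root_def sum_distrib_left)
  then show ?thesis by simp
qed

lemma coneQ_Delta_ps:
  assumes "cone_Q (Delta r) v"
  shows "0 \<le> (\<Sum>i\<in>{1..k}. v i)"
proof -
  obtain c :: "wt \<Rightarrow> rat" where c: "\<forall>a\<in>Delta r. 0 \<le> c a" "\<forall>m. of_int (v m) = (\<Sum>a\<in>Delta r. c a * of_int (a m))"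
    using assms unfolding cone_Q_def by blast
  have "(of_int (\<Sum>i\<in>{1..k}. v i) :: rat) = (\<Sum>i\<in>{1..k}. \<Sum>a\<in>Delta r. c a * of_int (a i))"
    using c(2) by simp
  also have "\<dots> = (\<Sum>a\<in>Delta r. \<Sum>i\<in>{1..k}. c a * of_int (a i))" by (rule sum.swap)
  also have "\<dots> = (\<Sum>a\<in>Delta r. c a * of_int (\<Sum>i\<in>{1..k}. a i))" by (simp add: sum_distrib_left)
  also have "\<dots> \<ge> 0"
  proof (rule sum_nonneg)
    fix a assume a: "a \<in> Delta r"
    then obtain l where "l \<in> {1..r}" "a = simple_root r l" unfolding Delta_def by blast
    then have "0 \<le> (\<Sum>i\<in>{1..k}. a i)" using psum_simple by simp
    then have "0 \<le> (of_int (\<Sum>i\<in>{1..k}. a i) :: rat)" by (simp only: of_int_0_le_iff)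
    then show "0 \<le> c a * of_int (\<Sum>i\<in>{1..k}. a i)" using c(1) a by (intro mult_nonneg_nonneg) auto
  qed
  finally have "0 \<le> (of_int (\<Sum>i\<in>{1..k}. v i) :: rat)" .
  then show ?thesis by (simp only: of_int_0_le_iff)
qed

lemma coneN_Delta_even:
  assumes "cone_N (Delta r) v"
  shows "even (\<Sum>i\<in>{1..r}. v i)"
proof -
  obtain c where c: "\<forall>m. v m = (\<Sum>a\<in>Delta r. int (c a) * a m)"
    using assms unfolding cone_N_def by blast
  have "(\<Sum>i\<in>{1..r}. v i) = (\<Sum>i\<in>{1..r}. \<Sum>a\<in>Delta r. int (c a) * a i)"
    using c by simp
  also have "\<dots> = (\<Sum>a\<in>Delta r. \<Sum>i\<in>{1..r}. int (c a) * a i)" by (rule sum.swap)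
  also have "\<dots> = (\<Sum>a\<in>Delta r. int (c a) * (\<Sum>i\<in>{1..r}. a i))" by (simp add: sum_distrib_left)
  finally have e: "(\<Sum>i\<in>{1..r}. v i) = \<dots>" .
  have "even (\<Sum>a\<in>Delta r. int (c a) * (\<Sum>i\<in>{1..r}. a i))"
  proof (rule dvd_sum)
    fix a assume a: "a \<in> Delta r"
    then obtain l where "l \<in> {1..r}" "a = simple_root r l" unfolding Delta_def by blast
    then show "even (int (c a) * (\<Sum>i\<in>{1..r}. a i))" using tsum_simple by simp
  qed
  then show ?thesis using e by simp
qed

definition PS :: "wt \<Rightarrow> nat \<Rightarrow> int" where "PS v l = (\<Sum>i\<in>{1..l}. v i)"

lemma PS_0[simp]: "PS v 0 = 0" by (simp add: PS_def)
lemma PS_Suc: "PS v (Suc l) = PS v l + v (Suc l)" by (simp add: PS_def)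

lemma sum_eps_Suc: "(\<Sum>l\<in>{1..<r}. f l * eps (Suc l) m) = (if 1 \<le> m \<and> m - 1 \<in> {1..<r} then f (m - 1) else (0::int))"
proof (cases m)
  case 0 then show ?thesis by (simp add: eps_def)
next
  case (Suc m')
  have "(\<Sum>l\<in>{1..<r}. f l * eps (Suc l) m) = (\<Sum>l\<in>{1..<r}. f l * eps l m')"
    using Suc by (intro sum.cong refl) (simp add: eps_def)
  also have "\<dots> = (if m' \<in> {1..<r} then f m' else 0)" by (simp add: sum_epsS)
  finally show ?thesis using Suc by simp
qed

lemma abel_identity:
  assumes "1 \<le> r" "\<forall>m. m \<notin> {1..r} \<longrightarrow> v m = 0"
  shows "v m = (\<Sum>l\<in>{1..<r}. PS v l * (eps l m - eps (Suc l) m)) + PS v r * eps r m"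
proof -
  have "(\<Sum>l\<in>{1..<r}. PS v l * (eps l m - eps (Suc l) m))
       = (\<Sum>l\<in>{1..<r}. PS v l * eps l m) - (\<Sum>l\<in>{1..<r}. PS v l * eps (Suc l) m)"
    by (simp add: right_diff_distrib sum_subtractf)
  also have "\<dots> = (if m \<in> {1..<r} then PS v m else 0) - (if 1 \<le> m \<and> m - 1 \<in> {1..<r} then PS v (m - 1) else 0)"
    by (simp only: sum_epsS[OF finite_atLeastLessThan] sum_eps_Suc)
  finally have h: "(\<Sum>l\<in>{1..<r}. PS v l * (eps l m - eps (Suc l) m)) = \<dots>" .
  show ?thesis
  proof (cases "m = 0")
    case True then show ?thesis using h assms by (simp add: eps_def)
  next
    case False
    then obtain m' where m: "m = Suc m'" by (cases m) auto
    have ps: "PS v m = PS v m' + v m" using m PS_Suc by simp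
    consider "m < r" | "m = r" | "r < m" by linarith
    then show ?thesis
    proof cases
      case 1 then show ?thesis using h m ps by (cases "m' = 0") (auto simp: eps_def)
    next
      case 2 then show ?thesis using h m ps by (cases "m' = 0") (auto simp: eps_def)
    next
      case 3
      then have "v m = 0" using assms by auto
      then show ?thesis using h m 3 by (simp add: eps_def)
    qed
  qed
qed

lemma Delta_constr_Q:
  assumes r: "1 \<le> r" and s0: "\<forall>m. m \<notin> {1..r} \<longrightarrow> v m = 0"
    and ps: "\<forall>k\<le>r. 0 \<le> (\<Sum>i\<in>{1..k}. v i)"
  shows "cone_Q (Delta r) v"
proof -
  have pos: "0 \<le> PS v l" if "l \<le> r" for l using ps that by (simp add: PS_def)
  have c1: "coneR (Delta r) (\<lambda>m. \<Sum>l\<in>{1..<r}. of_int (PS v l) * of_int (simple_root r l m))"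
  proof (rule coneR_sum)
    fix l assume l: "l \<in> {1..<r}"
    show "coneR (Delta r) (\<lambda>m. of_int (PS v l) * of_int (simple_root r l m))"
      using l pos[of l] by (intro coneR_scale coneR_mem finite_Delta simple_in_Delta) auto
  qed simp
  have c2: "coneR (Delta r) (\<lambda>m. (of_int (PS v r) / 2) * of_int (simple_root r r m))"
    using r pos[of r] by (intro coneR_scale coneR_mem finite_Delta simple_in_Delta) auto
  show ?thesis unfolding cone_Q_coneR
  proof (rule coneR_ext[OF coneR_add[OF c1 c2]])
    fix m
    have "(\<Sum>l\<in>{1..<r}. (of_int (PS v l)::rat) * of_int (simple_root r l m))
        = of_int (\<Sum>l\<in>{1..<r}. PS v l * (eps l m - eps (Suc l) m))"
      by (simp add: of_int_sum) (intro sum.cong refl, simp add: simple_root_def wsub_def)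
    moreover have "(of_int (PS v r) / 2) * (of_int (simple_root r r m)::rat) = of_int (PS v r * eps r m)"
      by (simp add: simple_root_def)
    ultimately show "(\<Sum>l\<in>{1..<r}. (of_int (PS v l)::rat) * of_int (simple_root r l m))
        + (of_int (PS v r) / 2) * of_int (simple_root r r m) = of_int (v m)"
      using abel_identity[OF r s0, of m] by simp
  qed
qed

lemma Delta_constr_N:
  assumes r: "1 \<le> r" and s0: "\<forall>m. m \<notin> {1..r} \<longrightarrow> v m = 0"
    and ps: "\<forall>k\<le>r. 0 \<le> (\<Sum>i\<in>{1..k}. v i)" and ev: "even (\<Sum>i\<in>{1..r}. v i)"
  shows "cone_N (Delta r) v"
proof -
  have pos: "0 \<le> PS v l" if "l \<le> r" for l using ps that by (simp add: PS_def)
  have c1: "cone_N (Delta r) (\<lambda>m. \<Sum>l\<in>{1..<r}. int (nat (PS v l)) * simple_root r l m)"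
  proof (rule coneN_sum)
    fix l assume l: "l \<in> {1..<r}"
    show "cone_N (Delta r) (\<lambda>m. int (nat (PS v l)) * simple_root r l m)"
      using l by (intro coneN_scale coneN_mem finite_Delta simple_in_Delta) auto
  qed simp
  have c2: "cone_N (Delta r) (\<lambda>m. int (nat (PS v r div 2)) * simple_root r r m)"
    using r by (intro coneN_scale coneN_mem finite_Delta simple_in_Delta) auto
  show ?thesis
  proof (rule coneN_ext[OF coneN_add[OF c1 c2]])
    fix m
    have "(\<Sum>l\<in>{1..<r}. int (nat (PS v l)) * simple_root r l m)
        = (\<Sum>l\<in>{1..<r}. PS v l * (eps l m - eps (Suc l) m))"
      using pos by (intro sum.cong refl) (simp add: simple_root_def wsub_def)
    moreover have "int (nat (PS v r div 2)) * simple_root r r m = PS v r * eps r m"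
      using pos[of r] ev by (simp add: simple_root_def PS_def)
    ultimately show "(\<Sum>l\<in>{1..<r}. int (nat (PS v l)) * simple_root r l m)
        + int (nat (PS v r div 2)) * simple_root r r m = v m"
      using abel_identity[OF r s0, of m] by simp
  qed
qed




lemma dom_weight: "dominant r v \<Longrightarrow> k \<notin> {1..r} \<Longrightarrow> v k = 0"
  by (simp add: dominant_def is_weight_def)

lemma dom_step: "dominant r v \<Longrightarrow> 1 \<le> i \<Longrightarrow> i < r \<Longrightarrow> v (Suc i) \<le> v i"
  unfolding dominant_def coroot_pair_def by (drule conjunct2) (drule bspec[of _ _ i], auto)

lemma dom_last: "dominant r v \<Longrightarrow> 1 \<le> r \<Longrightarrow> 0 \<le> v r"
  unfolding dominant_def coroot_pair_def by (drule conjunct2) (drule bspec[of _ _ r], auto)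

lemma dom_mono: assumes "dominant r v" "1 \<le> a" "a \<le> b" "b \<le> r" shows "v b \<le> v a"
proof -
  have "a + n \<le> r \<longrightarrow> v (a + n) \<le> v a" for n
  proof (induction n)
    case (Suc n)
    then show ?case using dom_step[OF assms(1), of "a + n"] assms(2) by auto
  qed simp
  from this[of "b - a"] assms show ?thesis by simp
qed

lemma dom_nonneg: assumes "dominant r v" shows "0 \<le> v k"
proof (cases "k \<in> {1..r}")
  case True
  then show ?thesis using dom_mono[OF assms, of k r] dom_last[OF assms] by auto
next
  case False then show ?thesis using dom_weight[OF assms] by simp
qed

lemma wsub_app: "wsub u v m = u m - v m" by (simp add: wsub_def)

theorem main:
  fixes r q :: nat and lam :: wt
  assumes r1: "1 \<le> r"
    and dom: "dominant r lam"
    and nz: "lam \<noteq> (\<lambda>k. 0)"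
    and qdef: "q = Max (supp r lam)"
  shows "LB_G r lam = {wsub (wadd lam (fund_weight (q - 1))) (fund_weight q)}"
proof -
  define A where "A = pos_roots_lam r lam"
  have finA: "finite A" unfolding A_def by (rule finite_pos_roots_lam)
  have subA: "A \<subseteq> pos_roots r" unfolding A_def pos_roots_lam_def by blast
  have fin_supp: "finite (supp r lam)" unfolding supp_def by simp
  obtain k0 where k0: "lam k0 \<noteq> 0" using nz by auto
  then have "k0 \<in> {1..r}" using dom_weight[OF dom] by blast
  then obtain k1 where "k1 \<in> supp r lam" using supp_above[of k0 r lam] k0 by auto
  then have ne: "supp r lam \<noteq> {}" by blast
  have qs: "q \<in> supp r lam" using Max_in[OF fin_supp ne] qdef by simp
  have qmax: "k \<le> q" if "k \<in> supp r lam" for k using Max_ge[OF fin_supp that] qdef by simp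
  have q1: "1 \<le> q" "q \<le> r" using qs by (auto simp: supp_def)
  have zero_above: "lam j = 0" if qj: "q < j" "j \<le> r" for j
  proof (rule ccontr)
    assume "lam j \<noteq> 0"
    moreover have "1 \<le> j" using qj q1 by simp
    ultimately obtain k where "k \<in> supp r lam" "j \<le> k" using supp_above[of j r lam] qj by auto
    then show False using qmax qj by fastforce
  qed
  have qstep: "lam (Suc q) < lam q" if "q < r"
    using qs that dom_step[OF dom, of q] q1 by (auto simp: supp_def coroot_pair_def)
  have qlast: "0 < lam r" if "q = r"
    using qs that dom_last[OF dom r1] by (auto simp: supp_def coroot_pair_def)
  define mu0 where "mu0 = (\<lambda>k. lam k - eps q k)"
  have mu0_eq: "wsub (wadd lam (fund_weight (q - 1))) (fund_weight q) = mu0"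
  proof
    fix k show "wsub (wadd lam (fund_weight (q - 1))) (fund_weight q) k = mu0 k"
      unfolding mu0_def using q1 by (cases "k = q") (auto simp: wsub_def wadd_def fund_weight_def eps_def)
  qed
  have eps_out: "eps i m = 0" if "i \<in> {1..r}" "m \<notin> {1..r}" for i m
    using that by (auto simp: eps_def)
  have dom0: "dominant r mu0"
    unfolding dominant_def is_weight_def
  proof (intro conjI allI impI ballI)
    fix k assume "k \<notin> {1..r}"
    then show "mu0 k = 0" using dom_weight[OF dom] eps_out[of q k] q1 by (simp add: mu0_def)
  next
    fix i assume i: "i \<in> {1..r}"
    show "0 \<le> coroot_pair r mu0 i"
    proof (cases "i < r")
      case True
      have "lam (Suc i) \<le> lam i" using dom_step[OF dom, of i] i True by auto
      then show ?thesis using True qstep by (auto simp: coroot_pair_def mu0_def eps_def)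
    next
      case False
      then have "i = r" using i by auto
      then show ?thesis using qlast dom_last[OF dom r1] by (auto simp: coroot_pair_def mu0_def eps_def)
    qed
  qed
  have d0: "wsub lam mu0 = eps q" by (auto simp: wsub_def mu0_def)
  have ps_eps: "0 \<le> (\<Sum>i\<in>{1..k}. eps j i)" for j k by (simp add: sum_eps_int2)
  have s0_eps: "\<forall>m. m \<notin> {1..r} \<longrightarrow> eps q m = 0" using eps_out q1 by auto
  have mu0G: "mu0 \<in> Pi_plus_G r lam"
    unfolding Pi_plus_G_def using dom0 d0 Delta_constr_Q[OF r1 s0_eps] ps_eps by auto
  have mu0N: "mu0 \<notin> Pi_plus r lam"
  proof
    assume "mu0 \<in> Pi_plus r lam"
    then have "cone_N (Delta r) (eps q)" using d0 by (simp add: Pi_plus_def)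
    then have "even (\<Sum>i\<in>{1..r}. eps q i)" by (rule coneN_Delta_even)
    then show False using q1 by (simp add: sum_eps_int2)
  qed
  define S where "S = (Pi_plus_G r lam - Pi_plus r lam) \<union> LB r lam"
  have mu0S: "mu0 \<in> S" using mu0G mu0N by (simp add: S_def)
  have below: "cone_Q A (wsub mu0 \<nu>)" if nuS: "\<nu> \<in> S" for \<nu>
  proof (cases "\<nu> \<in> LB r lam")
    case True
    then have c: "2 \<le> r" "r - 1 \<notin> supp r lam" "r \<in> supp r lam"
      and nu: "\<nu> = wsub (wsub lam (simple_root r (r - 1))) (simple_root r r)"
      by (auto simp: LB_def split: if_splits)
    have qr: "q = r" using qmax[OF c(3)] q1 by simp
    have x: "wsub mu0 \<nu> = eps (r - 1)"
    proof
      fix m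
      have "Suc (r - 1) = r" using c by simp
      then show "wsub mu0 \<nu> m = eps (r - 1) m"
        using c qr by (simp add: nu wsub_def mu0_def simple_root_def)
    qed
    have lr: "lam (r - 1) \<noteq> 0"
    proof -
      have "r - 1 \<in> {1..r}" "r - 1 < r" using c by auto
      then have "lam (r - 1) = lam (Suc (r - 1))" using c(2) by (auto simp: supp_def coroot_pair_def)
      moreover have "lam r \<noteq> 0" using c(3) by (simp add: supp_def coroot_pair_def)
      moreover have "Suc (r - 1) = r" using c by simp
      ultimately show ?thesis by simp
    qed
    have "coneR A (\<lambda>m. of_int (eps (r - 1) m))"
    proof (rule transport[OF finA])
      show "\<forall>m. m \<notin> {1..r} \<longrightarrow> eps (r - 1) m = 0" using c eps_out[of "r - 1"] by auto
      show "\<forall>k\<le>r. 0 \<le> (\<Sum>i\<in>{1..k}. eps (r - 1) i)" using ps_eps by auto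
      show "\<forall>i j. 1 \<le> i \<longrightarrow> i < j \<longrightarrow> j \<le> r \<longrightarrow> 0 < eps (r - 1) i \<longrightarrow> eps (r - 1) j < 0 \<longrightarrow>
          wsub (eps i) (eps j) \<in> A" by (simp add: eps_def)
      show "\<forall>i. 1 \<le> i \<longrightarrow> i \<le> r \<longrightarrow> 0 < eps (r - 1) i \<longrightarrow> (\<lambda>k. 2 * eps i k) \<in> A"
      proof (intro allI impI)
        fix i assume "1 \<le> i" "i \<le> r" "0 < eps (r - 1) i"
        then have "i = r - 1" by (simp add: eps_def split: if_splits)
        then show "(\<lambda>k. 2 * eps i k) \<in> A" unfolding A_def using dbl_mem[of "r - 1" r lam] c lr by auto
      qed
    qed
    then show ?thesis using x by (simp add: cone_Q_coneR)
  next
    case False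
    then have nuG: "\<nu> \<in> Pi_plus_G r lam" and nuN: "\<nu> \<notin> Pi_plus r lam" using nuS by (auto simp: S_def)
    have domnu: "dominant r \<nu>" and cQ: "cone_Q (Delta r) (wsub lam \<nu>)" using nuG by (auto simp: Pi_plus_G_def)
    have ncN: "\<not> cone_N (Delta r) (wsub lam \<nu>)" using nuN domnu by (auto simp: Pi_plus_def)
    define d where "d = wsub lam \<nu>"
    have s0d: "\<forall>m. m \<notin> {1..r} \<longrightarrow> d m = 0"
      using dom_weight[OF dom] dom_weight[OF domnu] by (simp add: d_def wsub_def)
    have psd: "0 \<le> (\<Sum>i\<in>{1..k}. d i)" for k using coneQ_Delta_ps[OF cQ] by (simp add: d_def)
    have odd: "odd (\<Sum>i\<in>{1..r}. d i)"
    proof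
      assume "even (\<Sum>i\<in>{1..r}. d i)"
      then have "cone_N (Delta r) d" using Delta_constr_N[OF r1 s0d] psd by auto
      then show False using ncN by (simp add: d_def)
    qed
    have tot: "1 \<le> (\<Sum>i\<in>{1..r}. d i)" using psd[of r] odd by (cases "(\<Sum>i\<in>{1..r}. d i) = 0") auto
    define x where "x = wsub mu0 \<nu>"
    have xd: "x m = d m - eps q m" for m by (simp add: x_def d_def wsub_def mu0_def)
    have "coneR A (\<lambda>m. of_int (x m))"
    proof (rule transport[OF finA])
      show "\<forall>m. m \<notin> {1..r} \<longrightarrow> x m = 0" using s0d s0_eps xd by simp
      show "\<forall>k\<le>r. 0 \<le> (\<Sum>i\<in>{1..k}. x i)"
      proof (intro allI impI)
        fix k assume kr: "k \<le> r"
        have sx: "(\<Sum>i\<in>{1..k}. x i) = (\<Sum>i\<in>{1..k}. d i) - (if q \<in> {1..k} then 1 else 0)"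
          by (simp add: xd sum_subtractf sum_eps_int2)
        show "0 \<le> (\<Sum>i\<in>{1..k}. x i)"
        proof (cases "q \<le> k")
          case False then show ?thesis using sx psd[of k] by simp
        next
          case True
          have "{1..r} = {1..k} \<union> {Suc k..r}" using kr by auto
          then have "(\<Sum>i\<in>{1..r}. d i) = (\<Sum>i\<in>{1..k}. d i) + (\<Sum>i\<in>{Suc k..r}. d i)"
            by (simp add: sum.union_disjoint)
          moreover have "(\<Sum>i\<in>{Suc k..r}. d i) \<le> 0"
          proof (rule sum_nonpos)
            fix i assume "i \<in> {Suc k..r}"
            then have "lam i = 0" using zero_above True by auto
            then show "d i \<le> 0" using dom_nonneg[OF domnu, of i] by (simp add: d_def wsub_def)
          qed
          ultimately show ?thesis using sx tot by simp
        qed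
      qed
      show "\<forall>i j. 1 \<le> i \<longrightarrow> i < j \<longrightarrow> j \<le> r \<longrightarrow> 0 < x i \<longrightarrow> x j < 0 \<longrightarrow> wsub (eps i) (eps j) \<in> A"
      proof (intro allI impI)
        fix i j assume ij: "1 \<le> i" "i < j" "j \<le> r" "0 < x i" "x j < 0"
        have "lam i \<noteq> lam j"
        proof
          assume eq: "lam i = lam j"
          have iq: "i \<noteq> q"
          proof
            assume "i = q"
            then have "lam (Suc q) < lam q" using qstep ij by auto
            moreover have "lam j \<le> lam (Suc q)" using dom_mono[OF dom, of "Suc q" j] ij \<open>i = q\<close> by auto
            ultimately show False using eq \<open>i = q\<close> by simp
          qed
          have nu_ij: "\<nu> j \<le> \<nu> i" using dom_mono[OF domnu, of i j] ij by auto
          have xi: "x i = lam i - \<nu> i" using iq xd by (simp add: d_def wsub_def eps_def)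
          have "x j \<ge> lam j - \<nu> j - 1" using xd by (simp add: d_def wsub_def eps_def)
          then have "lam j - \<nu> j \<le> 0" using ij by simp
          then show False using xi eq nu_ij ij by simp
        qed
        then show "wsub (eps i) (eps j) \<in> A" unfolding A_def using diff_mem ij by blast
      qed
      show "\<forall>i. 1 \<le> i \<longrightarrow> i \<le> r \<longrightarrow> 0 < x i \<longrightarrow> (\<lambda>k. 2 * eps i k) \<in> A"
      proof (intro allI impI)
        fix i assume i: "1 \<le> i" "i \<le> r" "0 < x i"
        have "lam i \<noteq> 0"
        proof
          assume "lam i = 0"
          then have "x i = - \<nu> i - eps q i" using xd by (simp add: d_def wsub_def)
          moreover have "0 \<le> \<nu> i" by (rule dom_nonneg[OF domnu])
          moreover have "0 \<le> eps q i" by (simp add: eps_def)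
          ultimately show False using i by simp
        qed
        then show "(\<lambda>k. 2 * eps i k) \<in> A" unfolding A_def using dbl_mem i by blast
      qed
    qed
    then show ?thesis by (simp add: x_def cone_Q_coneR)
  qed
  have anti: "\<nu> = mu0" if "cone_Q A (wsub \<nu> mu0)" "cone_Q A (wsub mu0 \<nu>)" for \<nu>
  proof
    fix m
    have c1: "coneR A (\<lambda>m. of_int (wsub \<nu> mu0 m))" using that(1) by (simp add: cone_Q_coneR)
    have c2: "coneR A (\<lambda>m. - of_int (wsub \<nu> mu0 m))"
      using that(2) unfolding cone_Q_coneR by (rule coneR_ext) (simp add: wsub_def)
    have "(of_int (wsub \<nu> mu0 m) :: rat) = 0" by (rule antisym_cone[OF finA subA c1 c2])
    then show "\<nu> m = mu0 m" by (simp add: wsub_def)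
  qed
  have "LB_G r lam = {mu0}"
  proof
    show "LB_G r lam \<subseteq> {mu0}"
    proof
      fix \<mu> assume "\<mu> \<in> LB_G r lam"
      then have mS: "\<mu> \<in> S" and mx: "\<forall>\<nu>\<in>S. leQ r lam \<mu> \<nu> \<longrightarrow> \<nu> = \<mu>"
        by (auto simp: LB_G_def S_def Let_def)
      have "leQ r lam \<mu> mu0" using below[OF mS] by (simp add: leQ_def A_def)
      then show "\<mu> \<in> {mu0}" using mx mu0S by auto
    qed
    show "{mu0} \<subseteq> LB_G r lam"
    proof -
      have "\<forall>\<nu>\<in>S. leQ r lam mu0 \<nu> \<longrightarrow> \<nu> = mu0"
      proof (intro ballI impI)
        fix \<nu> assume nS: "\<nu> \<in> S" and "leQ r lam mu0 \<nu>"
        then have "cone_Q A (wsub \<nu> mu0)" by (simp add: leQ_def A_def)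
        then show "\<nu> = mu0" using anti below[OF nS] by blast
      qed
      then show ?thesis using mu0S by (auto simp: LB_G_def S_def Let_def)
    qed
  qed
  then show ?thesis using mu0_eq by simp
qed



theorem proposition2p15:
  fixes r q :: nat and lam :: wt
  assumes "1 \<le> r"
    and "dominant r lam"
    and "lam \<noteq> (\<lambda>k. 0)"
    and "q = Max (supp r lam)"
  shows "LB_G r lam = {wsub (wadd lam (fund_weight (q - 1))) (fund_weight q)}"
  using main[OF assms] .

end
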